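(* Let $X\in\mathbb{R}^{N\times d}$ have rows ${\bm{x}}_1^\top,\dots,{\bm{x}}_N^\top$, let $Y\in\mathbb{R}^N$, $\mathbf{B}_0\in\mathbb{R}^{h\times d}$, ${\bm{v}}_0\in\mathbb{R}^h$, ${\bm{q}}_0=X\mathbf{B}_0^\top{\bm{v}}_0$, ${\bm{b}}_0=\mathrm{vec}(\mathbf{B}_0)$, and let $\nabla_{{\bm{b}}}{\bm{q}}_0\in\mathbb{R}^{N\times hd}$ be the Jacobian whose $n$-th row is $\mathrm{vec}({\bm{v}}_0{\bm{x}}_n^\top)^\top$. Let $\mathcal{K}_0=X(\mathbf{B}_0^\top\mathbf{B}_0+\|{\bm{v}}_0\|_2^2 I_{d\times d})X^\top$, assumed invertible, and let $C_1=\mathcal{K}_0^{-1}$. Define $\mathbf{B}_t$ by ${\bm{b}}_t=\mathrm{vec}(\mathbf{B}_t)={\bm{b}}_0-(\nabla_{{\bm{b}}}{\bm{q}}_0)^\top\mathcal{K}_0^{-1}({\bm{q}}_0-Y)$. Then $\mathrm{tr}(\mathbf{B}_0^\top\mathbf{B}_t)={\bm{b}}_0^\top{\bm{b}}_0-{\bm{q}}_0^\top C_1({\bm{q}}_0-Y)$, and, regarding this expression as a function of ${\bm{q}}_0\in\mathbb{R}^N$ with ${\bm{b}}_0^\top{\bm{b}}_0$ and $C_1$ held fixed, ${\bm{q}}_0^*=\tfrac12 Y$ is a maximum of $\mathrm{tr}(\mathbf{B}_0^\top\mathbf{B}_t)$.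
   Context: Setting: overparameterized two-layer linear regression with loss $\frac12\|X\mathbf{B}^\top{\bm{v}}-Y\|_2^2$, backbone $\mathbf{B}\in\mathbb{R}^{h\times d}$ and linear head ${\bm{v}}\in\mathbb{R}^h$; $\mathbf{B}_0,{\bm{v}}_0$ are the parameters at the start of finetuning and ${\bm{b}}_t$ is the converged backbone obtained from the neural tangent kernel (linearized) approximation of gradient-descent training, with $\mathcal{K}_0$ the empirical NTK on $X$. $\mathrm{vec}$ denotes column-stacking vectorization. *)

theory Defs
  imports "HOL-Analysis.Analysis"
begin

text \<open>The ordering of coordinates (column stacking) is immaterial
  for a type-indexed vector; the bijection below is the vec operator.\<close>
definition vecm :: "real^'d^'h \<Rightarrow> real^('h \<times> 'd)" where
  "vecm B = (\<chi> p. B $ fst p $ snd p)"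

definition unvecm :: "real^('h \<times> 'd) \<Rightarrow> real^'d^'h" where
  "unvecm b = (\<chi> i j. b $ (i, j))"

end

theory Submission
  imports Defs
begin

lemma inner_T: "((transpose A :: real^'m^'n) *v x) \<bullet> y = x \<bullet> (A *v y)"
  by (metis dot_lmul_matrix transpose_matrix_vector)

lemma trace_vecm:
  fixes A :: "real^'d^'h"
  shows "trace (transpose A ** unvecm b) = vecm A \<bullet> b"
proof -
  have "trace (transpose A ** unvecm b) = (\<Sum>j\<in>UNIV. \<Sum>i\<in>UNIV. A $ i $ j * b $ (i, j))"
    by (simp add: trace_def matrix_matrix_mult_def transpose_def unvecm_def)
  also have "\<dots> = (\<Sum>i\<in>UNIV. \<Sum>j\<in>UNIV. A $ i $ j * b $ (i, j))"
    by (rule sum.swap)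
  also have "\<dots> = (\<Sum>p\<in>UNIV. A $ fst p $ snd p * b $ p)"
    by (simp add: sum.cartesian_product case_prod_beta flip: UNIV_Times_UNIV)
  also have "\<dots> = vecm A \<bullet> b"
    by (simp add: inner_vec_def vecm_def)
  finally show ?thesis .
qed

lemma J_b0:
  fixes X :: "real^'d^'n" and B0 :: "real^'d^'h" and v0 :: "real^'h"
  shows "(\<chi> n. vecm (\<chi> i j. v0 $ i * X $ n $ j)) *v vecm B0 = X *v (transpose B0 *v v0)"
proof -
  have "((\<chi> n. vecm (\<chi> i j. v0 $ i * X $ n $ j)) *v vecm B0) $ n = (X *v (transpose B0 *v v0)) $ n" for n
  proof -
    have "((\<chi> n. vecm (\<chi> i j. v0 $ i * X $ n $ j)) *v vecm B0) $ n
        = (\<Sum>p\<in>UNIV. v0 $ fst p * X $ n $ snd p * B0 $ fst p $ snd p)"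
      by (simp add: matrix_vector_mult_def vecm_def)
    also have "\<dots> = (\<Sum>i\<in>UNIV. \<Sum>j\<in>UNIV. v0 $ i * X $ n $ j * B0 $ i $ j)"
      by (simp add: sum.cartesian_product case_prod_beta flip: UNIV_Times_UNIV)
    also have "\<dots> = (\<Sum>j\<in>UNIV. \<Sum>i\<in>UNIV. v0 $ i * X $ n $ j * B0 $ i $ j)"
      by (rule sum.swap)
    also have "\<dots> = (X *v (transpose B0 *v v0)) $ n"
      by (simp add: matrix_vector_mult_def transpose_def sum_distrib_left mult_ac)
    finally show ?thesis .
  qed
  then show ?thesis by (simp add: vec_eq_iff)
qed

theorem lemma2:
  fixes X :: "real^'d^'n" and Y :: "real^'n" and B0 :: "real^'d^'h" and v0 :: "real^'h"
    and q0 :: "real^'n" and b0 :: "real^('h \<times> 'd)" and J :: "real^('h \<times> 'd)^'n"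
    and K0 :: "real^'n^'n" and C1 :: "real^'n^'n" and Bt :: "real^'d^'h"
  defines "q0 \<equiv> X *v (transpose B0 *v v0)"
    and "b0 \<equiv> vecm B0"
    and "J \<equiv> (\<chi> n. vecm (\<chi> i j. v0 $ i * X $ n $ j))"
    and "K0 \<equiv> X ** (transpose B0 ** B0 + (norm v0)^2 *\<^sub>R mat 1) ** transpose X"
    and "C1 \<equiv> matrix_inv K0"
    and "Bt \<equiv> unvecm (b0 - transpose J *v (matrix_inv K0 *v (q0 - Y)))"
  assumes "invertible K0"
  shows "trace (transpose B0 ** Bt) = b0 \<bullet> b0 - q0 \<bullet> (C1 *v (q0 - Y))
     \<and> (\<forall>q :: real^'n. b0 \<bullet> b0 - q \<bullet> (C1 *v (q - Y))
            \<le> b0 \<bullet> b0 - ((1/2) *\<^sub>R Y) \<bullet> (C1 *v ((1/2) *\<^sub>R Y - Y)))"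
proof -
  define c where "c = (norm v0)^2"
  define M where "M = transpose B0 ** B0 + c *\<^sub>R mat 1"
  have Mu: "M *v u = transpose B0 *v (B0 *v u) + c *\<^sub>R u" for u
    by (simp add: M_def matrix_vector_mul_assoc matrix_vector_mult_add_rdistrib
        flip: scaleR_matrix_vector_assoc)
  have Msym: "(M *v u) \<bullet> w = (B0 *v u) \<bullet> (B0 *v w) + c * (u \<bullet> w)" for u w
    by (simp add: Mu inner_add_left dot_lmul_matrix)
  have K0v: "K0 *v a = X *v (M *v (transpose X *v a))" for a
    by (simp add: K0_def M_def c_def matrix_vector_mul_assoc matrix_mul_assoc del: transpose_matrix_vector)
  have Ksym: "(K0 *v a) \<bullet> b = a \<bullet> (K0 *v b)" for a b
  proof -
    have "(K0 *v a) \<bullet> b = (M *v (transpose X *v a)) \<bullet> (transpose X *v b)"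
      by (metis K0v inner_T transpose_transpose)
    also have "\<dots> = (M *v (transpose X *v b)) \<bullet> (transpose X *v a)"
      unfolding Msym by (simp only: inner_commute)
    also have "\<dots> = a \<bullet> (K0 *v b)"
      by (metis K0v inner_T transpose_transpose inner_commute)
    finally show ?thesis .
  qed
  have Kpos: "(K0 *v a) \<bullet> a \<ge> 0" for a
  proof -
    have "(K0 *v a) \<bullet> a = (M *v (transpose X *v a)) \<bullet> (transpose X *v a)"
      by (metis K0v inner_T transpose_transpose)
    also have "\<dots> \<ge> 0" unfolding Msym c_def by simp
    finally show ?thesis .
  qed
  have KC: "K0 ** C1 = mat 1"
    using assms(7) unfolding C1_def matrix_inv_def invertible_def by (metis (mono_tags, lifting) someI_ex)
  have KCv: "K0 *v (C1 *v y) = y" for y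
    by (simp add: matrix_vector_mul_assoc KC)
  have Csym: "x \<bullet> (C1 *v y) = y \<bullet> (C1 *v x)" for x y
  proof -
    have "x \<bullet> (C1 *v y) = (K0 *v (C1 *v x)) \<bullet> (C1 *v y)" by (simp add: KCv)
    also have "\<dots> = (C1 *v x) \<bullet> y" by (metis Ksym KCv)
    finally show ?thesis by (simp add: inner_commute)
  qed
  have Cpos: "y \<bullet> (C1 *v y) \<ge> 0" for y
  proof -
    have "y \<bullet> (C1 *v y) = (K0 *v (C1 *v y)) \<bullet> (C1 *v y)" by (simp add: KCv)
    then show ?thesis using Kpos by simp
  qed
  have part1: "trace (transpose B0 ** Bt) = b0 \<bullet> b0 - q0 \<bullet> (C1 *v (q0 - Y))"
  proof -
    have "trace (transpose B0 ** Bt) = b0 \<bullet> (b0 - transpose J *v (C1 *v (q0 - Y)))"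
      by (simp add: Bt_def trace_vecm b0_def C1_def)
    also have "\<dots> = b0 \<bullet> b0 - (J *v b0) \<bullet> (C1 *v (q0 - Y))"
    proof -
      have "b0 \<bullet> (transpose J *v (C1 *v (q0 - Y))) = (J *v b0) \<bullet> (C1 *v (q0 - Y))"
        by (metis inner_commute inner_T)
      then show ?thesis by (simp only: inner_diff_right)
    qed
    also have "J *v b0 = q0" by (simp add: J_def b0_def q0_def J_b0)
    finally show ?thesis .
  qed
  have part2: "b0 \<bullet> b0 - q \<bullet> (C1 *v (q - Y))
            \<le> b0 \<bullet> b0 - ((1/2) *\<^sub>R Y) \<bullet> (C1 *v ((1/2) *\<^sub>R Y - Y))" for q
  proof -
    define u where "u = q - (1/2) *\<^sub>R Y"
    have q: "q = u + (1/2) *\<^sub>R Y" by (simp add: u_def)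
    have e: "(1/2) *\<^sub>R Y - Y = - ((1/2) *\<^sub>R Y)" by (simp add: vec_eq_iff algebra_simps)
    have e2: "q - Y = u - (1/2) *\<^sub>R Y" by (simp add: u_def vec_eq_iff)
    define w where "w = (1/2) *\<^sub>R Y"
    have neg: "C1 *v (- w) = - (C1 *v w)"
      by (simp add: vec_eq_iff matrix_vector_mult_def sum_negf)
    have "q \<bullet> (C1 *v (q - Y)) = (u + w) \<bullet> (C1 *v (u - w))"
      by (simp only: w_def e2 flip: q)
    also have "\<dots> = u \<bullet> (C1 *v u) - u \<bullet> (C1 *v w) + w \<bullet> (C1 *v u) - w \<bullet> (C1 *v w)"
      by (simp add: inner_add_left inner_diff_right matrix_vector_mult_diff_distrib)
    also have "w \<bullet> (C1 *v w) = - (((1/2) *\<^sub>R Y) \<bullet> (C1 *v ((1/2) *\<^sub>R Y - Y)))"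
      proof -
      have ew: "w - Y = - w" using e w_def by simp
      show ?thesis unfolding w_def[symmetric] ew neg inner_minus_right minus_minus ..
    qed
    finally have "q \<bullet> (C1 *v (q - Y)) = u \<bullet> (C1 *v u) - u \<bullet> (C1 *v ((1/2) *\<^sub>R Y))
          + ((1/2) *\<^sub>R Y) \<bullet> (C1 *v u) + ((1/2) *\<^sub>R Y) \<bullet> (C1 *v ((1/2) *\<^sub>R Y - Y))"
      by (simp add: w_def)
    moreover have "u \<bullet> (C1 *v ((1/2) *\<^sub>R Y)) = ((1/2) *\<^sub>R Y) \<bullet> (C1 *v u)" by (rule Csym)
    ultimately show ?thesis using Cpos[of u] by simp
  qed
  show ?thesis using part1 part2 by blast
qed

end
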